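(* Let $X$ be a finite set and $f$ a closure operator on $X$. Then the minimum number of weak orders (MNWO) of $f$ equals the width of the partially ordered set $(P(f),\subseteq)$, and the minimum number of binary classifiers (MNBC) of $f$ equals the cardinality of $B(f)$.
   Context: A closure operator on $X$ is a map $f:2^X\to 2^X$ with $A\subseteq f(A)$, $f(\emptyset)=\emptyset$, $f(f(A))=f(A)$, and $A\subseteq B\Rightarrow f(A)\subseteq f(B)$. $S(f)=\{A: f(A)=A\}$ is its set of closed sets. For a weak order (complete, transitive relation) $\succeq$ on $X$, the strategically rational operator $g_{\succeq}$ is defined by $g_\succeq(\emptyset)=\emptyset$ and, for nonempty $A$, $g_\succeq(A)=\{x\in X: \exists a\in A,\ a\succeq x\}$ (equivalently, $\{x: h_A(\succeq)\succeq x\}$ where $h_A(\succeq)$ is the set of $\succeq$-maximal elements of $A$). For $C\subseteq X$, the binary classifier $g_C$ is defined by $g_C(\emptyset)=\emptyset$, and for nonempty $A$, $g_C(A)=C$ if $A\subseteq C$ and $g_C(A)=X$ otherwise. The MNWO of $f$ is the smallest $n$ such that there are weak orders $\succeq_1,\ldots,\succeq_n$ with $f(A)=\bigcap_{i=1}^n g_{\succeq_i}(A)$ for all $A$; the MNBC of $f$ is the smallest $n$ such that there are subsets $C_1,\ldots,C_n$ of $X$ with $f(A)=\bigcap_{i=1}^n g_{C_i}(A)$ for all $A$. $P(f)$ denotes the set of elements of $S(f)$ that are not the intersection of other closed sets in $S(f)$, and $B(f)=P(f)\setminus\{\emptyset,X\}$. The width of a finite poset is the maximum cardinality of an antichain.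 *)

theory Defs
  imports Main
begin

text \<open>Ground set X is the universe of a finite type 'a (so X = UNIV, finite and nonempty).\<close>

definition closure_op :: "('a set \<Rightarrow> 'a set) \<Rightarrow> bool" where
  "closure_op f \<longleftrightarrow> (\<forall>A. A \<subseteq> f A) \<and> f {} = {} \<and> (\<forall>A. f (f A) = f A)
                      \<and> (\<forall>A B. A \<subseteq> B \<longrightarrow> f A \<subseteq> f B)"

definition closed_sets :: "('a set \<Rightarrow> 'a set) \<Rightarrow> 'a set set" where
  "closed_sets f = {A. f A = A}"

text \<open>P(f): closed sets that are not the intersection of other closed sets
  (intersection of the empty family is X = UNIV).\<close>
definition P_sets :: "('a set \<Rightarrow> 'a set) \<Rightarrow> 'a set set" where
  "P_sets f = {A \<in> closed_sets f. \<not> (\<exists>F. F \<subseteq> closed_sets f - {A} \<and> A = \<Inter>F)}"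

definition B_sets :: "('a set \<Rightarrow> 'a set) \<Rightarrow> 'a set set" where
  "B_sets f = P_sets f - {{}, UNIV}"

definition weak_order :: "('a \<Rightarrow> 'a \<Rightarrow> bool) \<Rightarrow> bool" where
  "weak_order R \<longleftrightarrow> (\<forall>x y. R x y \<or> R y x) \<and> (\<forall>x y z. R x y \<longrightarrow> R y z \<longrightarrow> R x z)"

text \<open>strategically rational operator; R a x means a \<succeq> x\<close>
definition g_wo :: "('a \<Rightarrow> 'a \<Rightarrow> bool) \<Rightarrow> 'a set \<Rightarrow> 'a set" where
  "g_wo R A = (if A = {} then {} else {x. \<exists>a\<in>A. R a x})"

definition g_bc :: "'a set \<Rightarrow> 'a set \<Rightarrow> 'a set" where
  "g_bc C A = (if A = {} then {} else if A \<subseteq> C then C else UNIV)"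

text \<open>MNWO: literal reading; the intersection of the empty family is X, so n = 0
  never works (f {} = {}).\<close>
definition MNWO :: "('a set \<Rightarrow> 'a set) \<Rightarrow> nat" where
  "MNWO f = (LEAST n. \<exists>R. (\<forall>i<n. weak_order (R i)) \<and>
                          (\<forall>A. f A = (\<Inter>i\<in>{..<n}. g_wo (R i) A)))"

text \<open>MNBC: the identity is required on nonempty A (on A = {} both sides are {}
  for n \<ge> 1; for n = 0 this is the convention that no classifier represents the
  trivial operator).\<close>
definition MNBC :: "('a set \<Rightarrow> 'a set) \<Rightarrow> nat" where
  "MNBC f = (LEAST n. \<exists>C. \<forall>A. A \<noteq> {} \<longrightarrow> f A = (\<Inter>i\<in>{..<n}. g_bc (C i) A))"

definition is_antichain :: "'a set set \<Rightarrow> bool" where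
  "is_antichain Q \<longleftrightarrow> (\<forall>x\<in>Q. \<forall>y\<in>Q. x \<subseteq> y \<longrightarrow> x = y)"

definition width :: "'a set set \<Rightarrow> nat" where
  "width Q = Max {card Y | Y. Y \<subseteq> Q \<and> is_antichain Y}"

end

theory Submission
  imports Defs
begin


lemma chain_union_in:
  fixes B :: "'b set set"
  shows "finite B \<Longrightarrow> B \<noteq> {} \<Longrightarrow> (\<forall>x\<in>B. \<forall>y\<in>B. x \<subseteq> y \<or> y \<subseteq> x) \<Longrightarrow> \<Union>B \<in> B"
proof (induction B rule: finite_ne_induct)
  case (singleton x) then show ?case by simp
next
  case (insert x F)
  then have u: "\<Union>F \<in> F" by blast
  then have "x \<subseteq> \<Union>F \<or> \<Union>F \<subseteq> x" using insert.prems by blast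
  then show ?case using u by (auto simp: sup_absorb1 sup_absorb2)
qed

lemma dilworth:
  fixes P :: "'b set set"
  assumes "finite P" "\<forall>Y\<subseteq>P. is_antichain Y \<longrightarrow> card Y \<le> k"
  shows "\<exists>col. (\<forall>x\<in>P. col x < k) \<and> (\<forall>x\<in>P. \<forall>y\<in>P. col x = col y \<longrightarrow> x \<subseteq> y \<or> y \<subseteq> x)"
  using assms
proof (induction "card P" arbitrary: P k rule: less_induct)
  case less
  show ?case
  proof (cases "P = {}")
    case True then show ?thesis by auto
  next
    case False
    obtain a where aP: "a \<in> P" and amax: "\<forall>b\<in>P. a \<subseteq> b \<longrightarrow> b = a"
      using finite_has_maximal[OF less.prems(1) False] by blast
    have "is_antichain {a}" by (simp add: is_antichain_def)
    moreover have "{a} \<subseteq> P" using aP by simp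
    ultimately have k1: "k \<ge> 1" using less.prems(2) by (metis card.empty card_insert_disjoint empty_iff finite.emptyI One_nat_def)
    define P' where "P' = P - {a}"
    have finP': "finite P'" using less.prems(1) P'_def by simp
    have cardP': "card P' < card P" unfolding P'_def by (rule card_Diff1_less[OF less.prems(1) aP])
    show ?thesis
    proof (cases "\<exists>Y\<subseteq>P'. is_antichain Y \<and> card Y = k")
      case False
      have "\<forall>Y\<subseteq>P'. is_antichain Y \<longrightarrow> card Y \<le> k - 1"
      proof (intro allI impI)
        fix Y assume Y: "Y \<subseteq> P'" "is_antichain Y"
        then have "Y \<subseteq> P" using P'_def by auto
        then have "card Y \<le> k" using less.prems(2) Y(2) by blast
        moreover have "card Y \<noteq> k" using False Y by blast
        ultimately show "card Y \<le> k - 1" by simp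
      qed
      from less.hyps[OF cardP' finP' this] obtain col' where
        c1: "\<forall>x\<in>P'. col' x < k - 1" and c2: "\<forall>x\<in>P'. \<forall>y\<in>P'. col' x = col' y \<longrightarrow> x \<subseteq> y \<or> y \<subseteq> x"
        by blast
      define col where "col = col'(a := k-1)"
      have "\<forall>x\<in>P. col x < k"
      proof
        fix u assume "u \<in> P"
        show "col u < k"
        proof (cases "u = a")
          case True then show ?thesis using k1 unfolding col_def by simp
        next
          case False then have "col' u < k - 1" using c1 \<open>u \<in> P\<close> P'_def by auto
          then show ?thesis using False unfolding col_def by simp
        qed
      qed
      moreover have "\<forall>x\<in>P. \<forall>y\<in>P. col x = col y \<longrightarrow> x \<subseteq> y \<or> y \<subseteq> x"
      proof (intro ballI impI)
        fix u v assume u: "u \<in> P" and v: "v \<in> P" and e: "col u = col v"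
        show "u \<subseteq> v \<or> v \<subseteq> u"
        proof (cases "u = a"; cases "v = a")
          assume "u \<noteq> a" "v \<noteq> a"
          then show ?thesis using c2 u v e unfolding col_def P'_def by auto
        next
          assume "u = a" "v \<noteq> a"
          then have "col' v < k - 1" using c1 v P'_def by auto
          then show ?thesis using e \<open>u = a\<close> \<open>v \<noteq> a\<close> unfolding col_def by auto
        next
          assume "u \<noteq> a" "v = a"
          then have "col' u < k - 1" using c1 u P'_def by auto
          then show ?thesis using e \<open>v = a\<close> \<open>u \<noteq> a\<close> unfolding col_def by auto
        qed simp
      qed
      ultimately show ?thesis by blast
    next
      case True
      then obtain Y0 where Y0: "Y0 \<subseteq> P'" "is_antichain Y0" "card Y0 = k" by blast
      have "\<forall>Y\<subseteq>P'. is_antichain Y \<longrightarrow> card Y \<le> k" using less.prems(2) P'_def by auto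
      from less.hyps[OF cardP' finP' this] obtain col where
        c1: "\<forall>x\<in>P'. col x < k" and c2: "\<forall>x\<in>P'. \<forall>y\<in>P'. col x = col y \<longrightarrow> x \<subseteq> y \<or> y \<subseteq> x"
        by blast
      define AC where "AC = {Y. Y \<subseteq> P' \<and> is_antichain Y \<and> card Y = k}"
      have colsurj: "\<exists>y\<in>Y. col y = i" if "Y \<in> AC" "i < k" for Y i
      proof -
        have Y: "Y \<subseteq> P'" "is_antichain Y" "card Y = k" using that AC_def by auto
        have inj: "inj_on col Y"
        proof (rule inj_onI)
          fix u v assume u: "u \<in> Y" and v: "v \<in> Y" and e: "col u = col v"
          have "u \<in> P'" "v \<in> P'" using u v Y(1) by auto
          then have "u \<subseteq> v \<or> v \<subseteq> u" using c2 e by blast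
          then show "u = v" using Y(2) u v unfolding is_antichain_def by blast
        qed
        have ck: "card (col ` Y) = card {..<k}" using card_image[OF inj] Y(3) by simp
        have sub: "col ` Y \<subseteq> {..<k}" using Y(1) c1 by auto
        have "col ` Y = {..<k}" by (rule card_subset_eq[OF finite_lessThan sub ck])
        then show ?thesis using that(2) by (metis imageE lessThan_iff)
      qed
      define M where "M i = {z \<in> P'. col z = i \<and> (\<exists>Y\<in>AC. z \<in> Y)}" for i
      define x where "x i = \<Union>(M i)" for i
      have xM: "x i \<in> M i" if ik: "i < k" for i
      proof -
        have "Y0 \<in> AC" using Y0 AC_def by auto
        then obtain y where "y \<in> Y0" "col y = i" using colsurj[OF _ ik] by blast
        then have "y \<in> M i" using \<open>Y0 \<in> AC\<close> Y0(1) unfolding M_def by auto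
        then have "M i \<noteq> {}" by blast
        moreover have "finite (M i)" using finP' unfolding M_def by simp
        moreover have "\<forall>u\<in>M i. \<forall>v\<in>M i. u \<subseteq> v \<or> v \<subseteq> u" using c2 unfolding M_def by auto
        ultimately show ?thesis unfolding x_def using chain_union_in by blast
      qed
      have belowx: "z \<subseteq> x i" if "z \<in> M i" for z i using that x_def by auto
      have "\<exists>i<k. x i \<subseteq> a"
      proof (rule ccontr)
        assume nx: "\<not> (\<exists>i<k. x i \<subseteq> a)"
        define X where "X = insert a (x ` {..<k})"
        have xP': "x i \<in> P'" "col (x i) = i" if "i < k" for i using xM[OF that] M_def by auto
        have "is_antichain X"
          unfolding is_antichain_def
        proof (intro ballI impI)
          fix u v assume u: "u \<in> X" and v: "v \<in> X" and uv: "u \<subseteq> v"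
          show "u = v"
          proof (cases "u = a")
            case True
            then show ?thesis
            proof (cases "v = a")
              case False
              then obtain j where "j < k" "v = x j" using v X_def by auto
              then show ?thesis using amax uv True xP' P'_def by auto
            qed simp
          next
            case False
            then obtain i where i: "i < k" "u = x i" using u X_def by auto
            show ?thesis
            proof (cases "v = a")
              case True then show ?thesis using nx i uv by auto
            next
              case False
              then obtain j where j: "j < k" "v = x j" using v X_def by auto
              obtain Y where Y: "Y \<in> AC" "x j \<in> Y" using xM[OF j(1)] M_def by auto
              obtain y where y: "y \<in> Y" "col y = i" using colsurj[OF Y(1) i(1)] by blast
              have "y \<in> M i" using y Y AC_def M_def by auto
              then have "y \<subseteq> x j" using belowx i j uv by blast
              then have "y = x j" using Y y AC_def is_antichain_def by auto
              then have "i = j" using y xP' j by auto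
              then show ?thesis using i j by simp
            qed
          qed
        qed
        moreover have "X \<subseteq> P" using X_def aP xP' P'_def by auto
        moreover have "card X = k + 1"
        proof -
          have "inj_on x {..<k}" using xP' unfolding inj_on_def by (metis lessThan_iff)
          then have "card (x ` {..<k}) = k" by (simp add: card_image)
          moreover have "a \<notin> x ` {..<k}" using xP' P'_def by auto
          ultimately show ?thesis unfolding X_def by simp
        qed
        ultimately have "card X \<le> k" using less.prems(2) by blast
        then show False using \<open>card X = k + 1\<close> by simp
      qed
      then obtain i where i: "i < k" "x i \<subseteq> a" by blast
      define K where "K = insert a {z \<in> P'. col z = i \<and> z \<subseteq> x i}"
      have Kchain: "\<forall>u\<in>K. \<forall>v\<in>K. u \<subseteq> v \<or> v \<subseteq> u" using c2 i unfolding K_def by auto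
      have "\<forall>Y\<subseteq>P - K. is_antichain Y \<longrightarrow> card Y \<le> k - 1"
      proof (intro allI impI)
        fix Y assume Y: "Y \<subseteq> P - K" "is_antichain Y"
        have "Y \<subseteq> P'" using Y K_def P'_def by auto
        then have le: "card Y \<le> k" using less.prems(2) Y P'_def by auto
        have "card Y \<noteq> k"
        proof
          assume "card Y = k"
          then have "Y \<in> AC" using AC_def Y \<open>Y \<subseteq> P'\<close> by auto
          then obtain y where y: "y \<in> Y" "col y = i" using colsurj i by blast
          then have "y \<in> M i" using \<open>Y \<in> AC\<close> \<open>Y \<subseteq> P'\<close> M_def by auto
          then have "y \<in> K" using belowx K_def M_def by auto
          then show False using y Y by auto
        qed
        then show "card Y \<le> k - 1" using le by simp
      qed
      moreover have "card (P - K) < card P"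
      proof (rule psubset_card_mono[OF less.prems(1)])
        show "P - K \<subset> P" using aP K_def by auto
      qed
      moreover have "finite (P - K)" using less.prems(1) by simp
      ultimately have "\<exists>col. (\<forall>x\<in>P-K. col x < k - 1) \<and> (\<forall>x\<in>P-K. \<forall>y\<in>P-K. col x = col y \<longrightarrow> x \<subseteq> y \<or> y \<subseteq> x)"
        using less.hyps by blast
      then obtain col2 where
        d1: "\<forall>x\<in>P-K. col2 x < k - 1" and d2: "\<forall>x\<in>P-K. \<forall>y\<in>P-K. col2 x = col2 y \<longrightarrow> x \<subseteq> y \<or> y \<subseteq> x"
        by blast
      define col3 where "col3 z = (if z \<in> K then k - 1 else col2 z)" for z
      have "\<forall>x\<in>P. col3 x < k"
      proof
        fix u assume u: "u \<in> P"
        show "col3 u < k"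
        proof (cases "u \<in> K")
          case True then show ?thesis using k1 unfolding col3_def by simp
        next
          case False then have "col2 u < k - 1" using d1 u by auto
          then show ?thesis using False unfolding col3_def by simp
        qed
      qed
      moreover have "\<forall>x\<in>P. \<forall>y\<in>P. col3 x = col3 y \<longrightarrow> x \<subseteq> y \<or> y \<subseteq> x"
      proof (intro ballI impI)
        fix u v assume u: "u \<in> P" and v: "v \<in> P" and e: "col3 u = col3 v"
        show "u \<subseteq> v \<or> v \<subseteq> u"
        proof (cases "u \<in> K"; cases "v \<in> K")
          assume "u \<notin> K" "v \<notin> K"
          then show ?thesis using d2 u v e unfolding col3_def by auto
        next
          assume "u \<in> K" "v \<notin> K"
          then have "col2 v < k - 1" using d1 v by auto
          then show ?thesis using e \<open>u \<in> K\<close> \<open>v \<notin> K\<close> unfolding col3_def by auto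
        next
          assume "u \<notin> K" "v \<in> K"
          then have "col2 u < k - 1" using d1 u by auto
          then show ?thesis using e \<open>v \<in> K\<close> \<open>u \<notin> K\<close> unfolding col3_def by auto
        qed (use Kchain in blast)
      qed
      ultimately show ?thesis by blast
    qed
  qed
qed



lemma cl: assumes "closure_op f"
  shows "A \<subseteq> f A" "f {} = {}" "f (f A) = f A" "A \<subseteq> B \<Longrightarrow> f A \<subseteq> f B"
  using assms unfolding closure_op_def by auto

lemma P_closed: "B \<in> P_sets f \<Longrightarrow> f B = B"
  unfolding P_sets_def closed_sets_def by auto

lemma UNIV_notin_P: "UNIV \<notin> P_sets f"
  unfolding P_sets_def by auto

lemma closed_repr:
  fixes f :: "'a::finite set \<Rightarrow> 'a set"
  assumes "f S = S"
  shows "S = \<Inter>{B \<in> P_sets f. S \<subseteq> B}"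
  using assms
proof (induction "card (UNIV - S)" arbitrary: S rule: less_induct)
  case less
  show ?case
  proof (cases "S \<in> P_sets f")
    case True then show ?thesis by blast
  next
    case False
    then obtain F where F: "F \<subseteq> closed_sets f - {S}" "S = \<Inter>F"
      using less.prems unfolding P_sets_def closed_sets_def by auto
    have sub: "\<Inter>{B \<in> P_sets f. S \<subseteq> B} \<subseteq> T" if T: "T \<in> F" for T
    proof -
      have ST: "S \<subseteq> T" "S \<noteq> T" "f T = T" using F T unfolding closed_sets_def by auto
      have "UNIV - T \<subset> UNIV - S" using ST by auto
      then have "card (UNIV - T) < card (UNIV - S)" by (simp add: psubset_card_mono)
      then have "T = \<Inter>{B \<in> P_sets f. T \<subseteq> B}" using less.hyps ST(3) by blast
      moreover have "\<Inter>{B \<in> P_sets f. S \<subseteq> B} \<subseteq> \<Inter>{B \<in> P_sets f. T \<subseteq> B}"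
        using ST(1) by auto
      ultimately show ?thesis by simp
    qed
    show ?thesis
    proof
      show "S \<subseteq> \<Inter>{B \<in> P_sets f. S \<subseteq> B}" by blast
      show "\<Inter>{B \<in> P_sets f. S \<subseteq> B} \<subseteq> S" using sub F(2) by blast
    qed
  qed
qed

lemma f_repr:
  fixes f :: "'a::finite set \<Rightarrow> 'a set"
  assumes c: "closure_op f"
  shows "f A = \<Inter>{B \<in> P_sets f. A \<subseteq> B}"
proof -
  have "f A = \<Inter>{B \<in> P_sets f. f A \<subseteq> B}" using closed_repr cl(3)[OF c] by blast
  moreover have "{B \<in> P_sets f. f A \<subseteq> B} = {B \<in> P_sets f. A \<subseteq> B}"
  proof (intro set_eqI iffI)
    fix B assume "B \<in> {B \<in> P_sets f. f A \<subseteq> B}"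
    then show "B \<in> {B \<in> P_sets f. A \<subseteq> B}" using cl(1)[OF c, of A] by auto
  next
    fix B assume B: "B \<in> {B \<in> P_sets f. A \<subseteq> B}"
    then have "f A \<subseteq> f B" using cl(4)[OF c] by auto
    then show "B \<in> {B \<in> P_sets f. f A \<subseteq> B}" using B P_closed by auto
  qed
  ultimately show ?thesis by simp
qed

lemma P_nonempty:
  fixes f :: "'a::finite set \<Rightarrow> 'a set"
  assumes c: "closure_op f"
  shows "P_sets f \<noteq> {}"
proof
  assume "P_sets f = {}"
  then have "f {} = UNIV" using f_repr[OF c, of "{}"] by simp
  then show False using cl(2)[OF c] by simp
qed

lemma width_props:
  fixes Q :: "'b set set"
  assumes "finite Q"
  shows W1: "Y \<subseteq> Q \<Longrightarrow> is_antichain Y \<Longrightarrow> card Y \<le> width Q"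
    and W2: "(\<forall>Y\<subseteq>Q. is_antichain Y \<longrightarrow> card Y \<le> m) \<Longrightarrow> width Q \<le> m"
    and W3: "Q \<noteq> {} \<Longrightarrow> width Q \<ge> 1"
proof -
  define S where "S = {card Y | Y. Y \<subseteq> Q \<and> is_antichain Y}"
  have fin: "finite S" unfolding S_def
  proof (rule finite_subset[of _ "card ` Pow Q"])
    show "{card Y |Y. Y \<subseteq> Q \<and> is_antichain Y} \<subseteq> card ` Pow Q" by auto
  qed (use assms in simp)
  have ne: "S \<noteq> {}" unfolding S_def is_antichain_def by auto
  have w: "width Q = Max S" unfolding width_def S_def by simp
  show W1: "card Y \<le> width Q" if "Y \<subseteq> Q" "is_antichain Y" for Y
    using that w fin unfolding S_def by (auto intro!: Max_ge)
  show "width Q \<le> m" if "\<forall>Y\<subseteq>Q. is_antichain Y \<longrightarrow> card Y \<le> m"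
    using that w fin ne unfolding S_def by (auto simp: Max_le_iff)
  show "width Q \<ge> 1" if Qne: "Q \<noteq> {}"
  proof -
    obtain q where "q \<in> Q" using Qne by blast
    then have "{q} \<subseteq> Q" "is_antichain {q}" unfolding is_antichain_def by auto
    then have "card {q} \<le> width Q" by (rule W1)
    then show ?thesis by simp
  qed
qed



lemma wo_refl: "weak_order R \<Longrightarrow> R x x"
  unfolding weak_order_def by blast

lemma g_wo_sub: "weak_order R \<Longrightarrow> A \<subseteq> g_wo R A"
  unfolding g_wo_def using wo_refl by fastforce

lemma g_wo_idem: assumes "weak_order R" "A \<noteq> {}"
  shows "g_wo R (g_wo R A) = g_wo R A"
proof -
  have ne: "g_wo R A \<noteq> {}" using g_wo_sub[OF assms(1), of A] assms(2) by blast
  show ?thesis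
  proof
    have gA: "g_wo R A = {x. \<exists>a\<in>A. R a x}" using assms(2) by (simp add: g_wo_def)
    have gg: "g_wo R (g_wo R A) = {x. \<exists>b\<in>g_wo R A. R b x}" using ne by (simp add: g_wo_def[of R "g_wo R A"])
    show "g_wo R (g_wo R A) \<subseteq> g_wo R A"
    proof
      fix x assume "x \<in> g_wo R (g_wo R A)"
      then obtain b where b: "b \<in> g_wo R A" "R b x" unfolding gg by blast
      then obtain a where a: "a \<in> A" "R a b" unfolding gA by blast
      have "R a x" using a(2) b(2) assms(1) unfolding weak_order_def by blast
      then show "x \<in> g_wo R A" unfolding gA using a(1) by blast
    qed
    show "g_wo R A \<subseteq> g_wo R (g_wo R A)" by (rule g_wo_sub[OF assms(1)])
  qed
qed

lemma g_wo_chain: assumes "weak_order R" "A \<noteq> {}" "B \<noteq> {}" "g_wo R A = A" "g_wo R B = B"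
  shows "A \<subseteq> B \<or> B \<subseteq> A"
proof (rule ccontr)
  assume "\<not> (A \<subseteq> B \<or> B \<subseteq> A)"
  then obtain x y where xy: "x \<in> A" "x \<notin> B" "y \<in> B" "y \<notin> A" by blast
  have dA: "z \<in> A" if "a \<in> A" "R a z" for a z
  proof -
    have "z \<in> g_wo R A" using assms(2) that unfolding g_wo_def by auto
    then show ?thesis using assms(4) by simp
  qed
  have dB: "z \<in> B" if "a \<in> B" "R a z" for a z
  proof -
    have "z \<in> g_wo R B" using assms(3) that unfolding g_wo_def by auto
    then show ?thesis using assms(5) by simp
  qed
  have "R x y \<or> R y x" using assms(1) unfolding weak_order_def by blast
  then show False using dA dB xy by blast
qed

lemma MNWO_eq:
  fixes f :: "'a::finite set \<Rightarrow> 'a set"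
  assumes c: "closure_op f"
  shows "MNWO f = width (P_sets f)"
proof -
  define P where "P = P_sets f"
  define n where "n = width P"
  have finP: "finite P" by simp
  have n1: "n \<ge> 1" using W3[OF finP] P_nonempty[OF c] P_def n_def by simp
  have exists: "\<exists>R. (\<forall>i<n. weak_order (R i)) \<and> (\<forall>A. f A = (\<Inter>i\<in>{..<n}. g_wo (R i) A))"
  proof -
    have "\<forall>Y\<subseteq>P. is_antichain Y \<longrightarrow> card Y \<le> n" using W1[OF finP] n_def by blast
    from dilworth[OF finP this] obtain col where
      c1: "\<forall>x\<in>P. col x < n" and c2: "\<forall>x\<in>P. \<forall>y\<in>P. col x = col y \<longrightarrow> x \<subseteq> y \<or> y \<subseteq> x"
      by blast
    define R where "R i a x = (\<forall>B\<in>P. col B = i \<longrightarrow> a \<in> B \<longrightarrow> x \<in> B)" for i a x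
    have wo: "weak_order (R i)" for i
      unfolding weak_order_def
    proof (intro conjI allI impI)
      fix a x
      show "R i a x \<or> R i x a"
      proof (rule ccontr)
        assume "\<not> (R i a x \<or> R i x a)"
        then obtain B B' where B: "B \<in> P" "col B = i" "a \<in> B" "x \<notin> B"
          and B': "B' \<in> P" "col B' = i" "x \<in> B'" "a \<notin> B'"
          unfolding R_def by blast
        have "B \<subseteq> B' \<or> B' \<subseteq> B" using c2 B(1,2) B'(1,2) by metis
        then show False using B B' by blast
      qed
    next
      fix a y z assume "R i a y" "R i y z"
      then show "R i a z" unfolding R_def by blast
    qed
    have rep: "f A = (\<Inter>i\<in>{..<n}. g_wo (R i) A)" for A
    proof (cases "A = {}")
      case True
      have "0 \<in> {..<n}" using n1 by simp
      then have "(\<Inter>i\<in>{..<n}. g_wo (R i) A) \<subseteq> g_wo (R 0) A" by blast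
      then show ?thesis using cl(2)[OF c] True unfolding g_wo_def by auto
    next
      case False
      have fA: "f A = \<Inter>{B \<in> P. A \<subseteq> B}" using f_repr[OF c] P_def by blast
      have g: "g_wo (R i) A = {x. \<exists>a\<in>A. R i a x}" for i using False by (simp add: g_wo_def)
      show ?thesis
      proof
        show "f A \<subseteq> (\<Inter>i\<in>{..<n}. g_wo (R i) A)"
        proof
          fix x assume x: "x \<in> f A"
          show "x \<in> (\<Inter>i\<in>{..<n}. g_wo (R i) A)"
          proof
            fix i assume "i \<in> {..<n}"
            show "x \<in> g_wo (R i) A"
            proof (rule ccontr)
              assume "x \<notin> g_wo (R i) A"
              then have na: "\<forall>a\<in>A. \<exists>B\<in>P. col B = i \<and> a \<in> B \<and> x \<notin> B" unfolding g R_def by auto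
              define M where "M = {B \<in> P. col B = i \<and> x \<notin> B}"
              have "finite M" unfolding M_def by simp
              moreover have "M \<noteq> {}" using na False unfolding M_def by blast
              moreover have "\<forall>u\<in>M. \<forall>v\<in>M. u \<subseteq> v \<or> v \<subseteq> u" using c2 unfolding M_def by auto
              ultimately have UM: "\<Union>M \<in> M" using chain_union_in by blast
              have "A \<subseteq> \<Union>M" using na unfolding M_def by blast
              then have "x \<in> \<Union>M" using UM x fA unfolding M_def by blast
              then show False unfolding M_def by blast
            qed
          qed
        qed
        show "(\<Inter>i\<in>{..<n}. g_wo (R i) A) \<subseteq> f A"
        proof
          fix x assume x: "x \<in> (\<Inter>i\<in>{..<n}. g_wo (R i) A)"
          show "x \<in> f A" unfolding fA
          proof
            fix B assume B: "B \<in> {B \<in> P. A \<subseteq> B}"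
            then have "col B < n" using c1 by auto
            then have "x \<in> g_wo (R (col B)) A" using x by blast
            then obtain a where "a \<in> A" "R (col B) a x" unfolding g by blast
            then show "x \<in> B" using B unfolding R_def by blast
          qed
        qed
      qed
    qed
    show ?thesis using wo rep by blast
  qed
  have lower: "n \<le> m" if R: "\<forall>i<m. weak_order (R i)" "\<forall>A. f A = (\<Inter>i\<in>{..<m}. g_wo (R i) A)" for m R
  proof -
    have m1: "m \<ge> 1"
    proof (rule ccontr)
      assume "\<not> m \<ge> 1" then have "m = 0" by simp
      then have "f {} = UNIV" using R(2) by simp
      then show False using cl(2)[OF c] by simp
    qed
    have closed_g: "f (g_wo (R i) A) = g_wo (R i) A" if "i < m" "A \<noteq> {}" for i A
    proof
      have "f (g_wo (R i) A) = (\<Inter>j\<in>{..<m}. g_wo (R j) (g_wo (R i) A))" using R(2)[rule_format, of "g_wo (R i) A"] by simp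
      then have "f (g_wo (R i) A) \<subseteq> g_wo (R i) (g_wo (R i) A)" using that(1) by blast
      then show "f (g_wo (R i) A) \<subseteq> g_wo (R i) A" using g_wo_idem R(1) that by metis
      show "g_wo (R i) A \<subseteq> f (g_wo (R i) A)" using cl(1)[OF c] .
    qed
    have exi: "\<exists>i<m. g_wo (R i) A = A" if A: "A \<in> P" "A \<noteq> {}" for A
    proof (rule ccontr)
      assume nex: "\<not> (\<exists>i<m. g_wo (R i) A = A)"
      define F where "F = (\<lambda>i. g_wo (R i) A) ` {..<m}"
      have "F \<subseteq> closed_sets f - {A}" using nex closed_g A(2) unfolding F_def closed_sets_def by auto
      moreover have "A = \<Inter>F"
      proof -
        have "A = f A" using P_closed A(1) unfolding P_def by metis
        also have "\<dots> = \<Inter>F" using R(2)[rule_format, of A] unfolding F_def by simp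
        finally show ?thesis .
      qed
      ultimately show False using A(1) unfolding P_def P_sets_def by blast
    qed
    have "\<forall>Y\<subseteq>P. is_antichain Y \<longrightarrow> card Y \<le> m"
    proof (intro allI impI)
      fix Y assume Y: "Y \<subseteq> P" "is_antichain Y"
      show "card Y \<le> m"
      proof (cases "{} \<in> Y")
        case True
        then have "Y \<subseteq> {{}}" using Y(2) unfolding is_antichain_def by blast
        then have "card Y \<le> 1" using card_mono[of "{{}}" Y] by simp
        then show ?thesis using m1 by simp
      next
        case False
        define \<iota> where "\<iota> A = (SOME i. i < m \<and> g_wo (R i) A = A)" for A
        have io: "\<iota> A < m \<and> g_wo (R (\<iota> A)) A = A" if "A \<in> Y" for A
        proof -
          have "A \<in> P" "A \<noteq> {}" using that Y(1) False by auto
          then have "\<exists>i. i < m \<and> g_wo (R i) A = A" using exi by blast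
          then show ?thesis unfolding \<iota>_def by (rule someI_ex)
        qed
        have "inj_on \<iota> Y"
        proof (rule inj_onI)
          fix A B assume AB: "A \<in> Y" "B \<in> Y" "\<iota> A = \<iota> B"
          have "A \<noteq> {}" "B \<noteq> {}" using AB False by auto
          moreover have "weak_order (R (\<iota> A))" using R(1) io[OF AB(1)] by blast
          moreover have "g_wo (R (\<iota> A)) A = A" using io[OF AB(1)] by blast
          moreover have "g_wo (R (\<iota> A)) B = B" using io[OF AB(2)] AB(3) by simp
          ultimately have "A \<subseteq> B \<or> B \<subseteq> A" using g_wo_chain by blast
          then show "A = B" using Y(2) AB unfolding is_antichain_def by blast
        qed
        moreover have "\<iota> ` Y \<subseteq> {..<m}" using io by auto
        ultimately show ?thesis using card_inj_on_le[of \<iota> Y "{..<m}"] by simp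
      qed
    qed
    then show ?thesis using W2[OF finP] n_def by blast
  qed
  show ?thesis unfolding MNWO_def P_def[symmetric] n_def[symmetric]
  proof (rule Least_equality)
    show "\<exists>R. (\<forall>i<n. weak_order (R i)) \<and> (\<forall>A. f A = (\<Inter>i\<in>{..<n}. g_wo (R i) A))" by (rule exists)
  next
    fix m :: nat assume "\<exists>R. (\<forall>i<m. weak_order (R i)) \<and> (\<forall>A. f A = (\<Inter>i\<in>{..<m}. g_wo (R i) A))"
    then obtain R where "\<forall>i<m. weak_order (R i)" "\<forall>A. f A = (\<Inter>i\<in>{..<m}. g_wo (R i) A)" by blast
    then show "n \<le> m" by (rule lower)
  qed
qed

lemma MNBC_eq:
  fixes f :: "'a::finite set \<Rightarrow> 'a set"
  assumes c: "closure_op f"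
  shows "MNBC f = card (B_sets f)"
proof -
  define Bs where "Bs = B_sets f"
  define n where "n = card Bs"
  have finB: "finite Bs" by simp
  have BsP: "Bs \<subseteq> P_sets f" unfolding Bs_def B_sets_def by auto
  have exists: "\<exists>C. \<forall>A. A \<noteq> {} \<longrightarrow> f A = (\<Inter>i\<in>{..<n}. g_bc (C i) A)"
  proof -
    obtain h where h: "bij_betw h {0..<n} Bs" unfolding n_def using ex_bij_betw_nat_finite[OF finB] by blast
    then have himg: "h ` {..<n} = Bs" unfolding bij_betw_def by (simp add: atLeast0LessThan)
    have "f A = (\<Inter>i\<in>{..<n}. g_bc (h i) A)" if A: "A \<noteq> {}" for A
    proof -
      have "(\<Inter>i\<in>{..<n}. g_bc (h i) A) = (\<Inter>B\<in>Bs. g_bc B A)"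
        unfolding himg[symmetric] image_image ..
      also have "\<dots> = \<Inter>{B \<in> Bs. A \<subseteq> B}"
      proof (rule set_eqI)
        fix x
        have "x \<in> (\<Inter>B\<in>Bs. g_bc B A) \<longleftrightarrow> (\<forall>B\<in>Bs. x \<in> g_bc B A)" by blast
        also have "\<dots> \<longleftrightarrow> (\<forall>B\<in>Bs. A \<subseteq> B \<longrightarrow> x \<in> B)" using A unfolding g_bc_def by simp
        also have "\<dots> \<longleftrightarrow> x \<in> \<Inter>{B \<in> Bs. A \<subseteq> B}" by blast
        finally show "x \<in> (\<Inter>B\<in>Bs. g_bc B A) \<longleftrightarrow> x \<in> \<Inter>{B \<in> Bs. A \<subseteq> B}" .
      qed
      also have "\<dots> = f A"
      proof -
        have "{B \<in> Bs. A \<subseteq> B} = {B \<in> P_sets f. A \<subseteq> B}"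
        proof (intro set_eqI iffI)
          fix B assume "B \<in> {B \<in> Bs. A \<subseteq> B}"
          then show "B \<in> {B \<in> P_sets f. A \<subseteq> B}" using BsP by blast
        next
          fix B assume B: "B \<in> {B \<in> P_sets f. A \<subseteq> B}"
          then have "B \<noteq> {}" using A by blast
          moreover have "B \<noteq> UNIV" using B UNIV_notin_P[of f] by blast
          ultimately show "B \<in> {B \<in> Bs. A \<subseteq> B}" using B unfolding Bs_def B_sets_def by blast
        qed
        then show ?thesis using f_repr[OF c, of A] by simp
      qed
      finally show ?thesis by (rule sym)
    qed
    then show ?thesis by blast
  qed
  have lower: "n \<le> m" if C: "\<forall>A. A \<noteq> {} \<longrightarrow> f A = (\<Inter>i\<in>{..<m}. g_bc (C i) A)" for m C
  proof -
    have "Bs \<subseteq> C ` {..<m}"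
    proof
      fix B assume B: "B \<in> Bs"
      have Bp: "B \<in> P_sets f" "B \<noteq> {}" "B \<noteq> UNIV" using B unfolding Bs_def B_sets_def by auto
      have "\<exists>i<m. g_bc (C i) B = B"
      proof (rule ccontr)
        assume nex: "\<not> (\<exists>i<m. g_bc (C i) B = B)"
        define F where "F = (\<lambda>i. g_bc (C i) B) ` {..<m}"
        have cli: "f (g_bc (C i) B) = g_bc (C i) B" if "i < m" for i
        proof (cases "B \<subseteq> C i")
          case True
          then have "C i \<noteq> {}" using Bp by auto
          then have "f (C i) = (\<Inter>j\<in>{..<m}. g_bc (C j) (C i))" using C[rule_format, of "C i"] by simp
          then have "f (C i) \<subseteq> g_bc (C i) (C i)" using that by blast
          then have "f (C i) \<subseteq> C i" unfolding g_bc_def using \<open>C i \<noteq> {}\<close> by simp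
          then show ?thesis using True Bp cl(1)[OF c, of "C i"] unfolding g_bc_def by auto
        next
          case False
          then show ?thesis using Bp cl(1)[OF c, of UNIV] unfolding g_bc_def by auto
        qed
        have "F \<subseteq> closed_sets f - {B}" using nex cli unfolding F_def closed_sets_def by auto
        moreover have "B = \<Inter>F"
        proof -
          have "B = f B" using P_closed Bp(1) by metis
          also have "\<dots> = \<Inter>F" using C[rule_format, OF Bp(2)] unfolding F_def by simp
          finally show ?thesis .
        qed
        ultimately show False using Bp(1) unfolding P_sets_def by blast
      qed
      then obtain i where "i < m" "g_bc (C i) B = B" by blast
      then have "C i = B" using Bp unfolding g_bc_def by (auto split: if_splits)
      then show "B \<in> C ` {..<m}" using \<open>i < m\<close> by blast
    qed
    then have "card Bs \<le> card (C ` {..<m})" by (simp add: card_mono)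
    also have "\<dots> \<le> m" using card_image_le[of "{..<m}" C] by simp
    finally show ?thesis using n_def by simp
  qed
  show ?thesis unfolding MNBC_def Bs_def[symmetric] n_def[symmetric]
  proof (rule Least_equality)
    show "\<exists>C. \<forall>A. A \<noteq> {} \<longrightarrow> f A = (\<Inter>i\<in>{..<n}. g_bc (C i) A)" by (rule exists)
  next
    fix m :: nat assume "\<exists>C. \<forall>A. A \<noteq> {} \<longrightarrow> f A = (\<Inter>i\<in>{..<m}. g_bc (C i) A)"
    then obtain C where "\<forall>A. A \<noteq> {} \<longrightarrow> f A = (\<Inter>i\<in>{..<m}. g_bc (C i) A)" ..
    then show "n \<le> m" by (rule lower)
  qed
qed

theorem proposition3:
  fixes f :: "'a::finite set \<Rightarrow> 'a set"
  assumes "closure_op f"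
  shows "MNWO f = width (P_sets f) \<and> MNBC f = card (B_sets f)"
  using MNWO_eq[OF assms] MNBC_eq[OF assms] by simp

end
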